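(* Let $N\geq 2$ and $1\leq k<N$ be integers. Let $g:[0,+\infty)\to\mathbb R$ be twice differentiable on $(0,+\infty)$ and such that $$g''(s)-\frac 1 s g'(s)\geq 0\quad \text{for all } s>0.$$ Then the solution of the Cauchy problem $$\partial_t u=\mathcal P_k^- u \ \text{ in } (0,+\infty)\times\mathbb R^N,\qquad u(0,x)=u_0(x):=g(\vert x\vert),$$ is $$u(t,x)=g\left(\sqrt{2kt+\vert x\vert^2}\right),\quad t\geq 0,\ x\in\mathbb R^N.$$
   Context: For a function $u:\mathbb R^N\to\mathbb R$ (of class $C^2$, or in the viscosity sense), let $\lambda_1(D^2u)\leq\cdots\leq\lambda_N(D^2u)$ denote the eigenvalues of the Hessian matrix $D^2u$, and define the fully nonlinear degenerate elliptic operator $\mathcal P_k^- u:=\sum_{i=1}^k\lambda_i(D^2u)$ (sum of the $k$ smallest eigenvalues). Solutions of the Cauchy problem are understood in the viscosity sense; $\vert x\vert$ is the Euclidean norm. *)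

theory Defs
  imports "HOL-Analysis.Analysis" "HOL-Library.Multiset"
begin

text \<open>Eigenvalues (with multiplicity) of a real symmetric matrix. For symmetric
  matrices algebraic and geometric multiplicities coincide, so the multiplicity of an
  eigenvalue is the dimension of its eigenspace.\<close>
definition eigenspace :: "real^'n^'n \<Rightarrow> real \<Rightarrow> (real^'n) set" where
  "eigenspace A l = {v. A *v v = l *\<^sub>R v}"

definition eigvals_mset :: "real^'n^'n \<Rightarrow> real multiset" where
  "eigvals_mset A =
     (\<Sum>l\<in>{l. \<exists>v. v \<noteq> 0 \<and> A *v v = l *\<^sub>R v}. replicate_mset (dim (eigenspace A l)) l)"

text \<open>lambda_1 <= ... <= lambda_N : the sorted list of eigenvalues\<close>
definition eigvals_sorted :: "real^'n^'n \<Rightarrow> real list" where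
  "eigvals_sorted A = sorted_list_of_multiset (eigvals_mset A)"

text \<open>Pucci-type operator P_k^- : sum of the k smallest eigenvalues\<close>
definition Pk_minus :: "nat \<Rightarrow> real^'n^'n \<Rightarrow> real" where
  "Pk_minus k A = sum_list (take k (eigvals_sorted A))"

text \<open>The parabolic domain (0,+infinity) x R^N.\<close>
definition pdom :: "(real \<times> (real^'n)) set" where
  "pdom = {(t, x). t > 0}"

text \<open>phi is a C^{1,2} test function on (0,+infinity) x R^N with time derivative phit,
  spatial gradient Dphi and spatial Hessian D2phi (all jointly continuous).\<close>
definition C12_test ::
  "(real \<Rightarrow> real^'n \<Rightarrow> real) \<Rightarrow> (real \<Rightarrow> real^'n \<Rightarrow> real) \<Rightarrow>
   (real \<Rightarrow> real^'n \<Rightarrow> real^'n) \<Rightarrow> (real \<Rightarrow> real^'n \<Rightarrow> real^'n^'n) \<Rightarrow> bool" where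
  "C12_test phi phit Dphi D2phi \<longleftrightarrow>
     (\<forall>t x. t > 0 \<longrightarrow>
        ((\<lambda>s. phi s x) has_real_derivative phit t x) (at t) \<and>
        ((\<lambda>y. phi t y) has_derivative (\<lambda>h. Dphi t x \<bullet> h)) (at x) \<and>
        ((\<lambda>y. Dphi t y) has_derivative (\<lambda>h. D2phi t x *v h)) (at x)) \<and>
     continuous_on pdom (\<lambda>(t, x). phi t x) \<and>
     continuous_on pdom (\<lambda>(t, x). phit t x) \<and>
     continuous_on pdom (\<lambda>(t, x). Dphi t x) \<and>
     continuous_on pdom (\<lambda>(t, x). D2phi t x)"

definition local_max_at :: "(real \<Rightarrow> real^'n \<Rightarrow> real) \<Rightarrow> real \<Rightarrow> real^'n \<Rightarrow> bool" where
  "local_max_at w t0 x0 \<longleftrightarrow>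
     (\<exists>e>0. \<forall>s y. s > 0 \<and> \<bar>s - t0\<bar> < e \<and> dist y x0 < e \<longrightarrow> w s y \<le> w t0 x0)"

definition local_min_at :: "(real \<Rightarrow> real^'n \<Rightarrow> real) \<Rightarrow> real \<Rightarrow> real^'n \<Rightarrow> bool" where
  "local_min_at w t0 x0 \<longleftrightarrow>
     (\<exists>e>0. \<forall>s y. s > 0 \<and> \<bar>s - t0\<bar> < e \<and> dist y x0 < e \<longrightarrow> w s y \<ge> w t0 x0)"

text \<open>Viscosity solution of  u_t = P_k^- u  in (0,+infinity) x R^N.\<close>
definition viscosity_subsolution :: "nat \<Rightarrow> (real \<Rightarrow> real^'n \<Rightarrow> real) \<Rightarrow> bool" where
  "viscosity_subsolution k u \<longleftrightarrow>
     (\<forall>t0 x0 phi phit Dphi D2phi. t0 > 0 \<and> C12_test phi phit Dphi D2phi \<and>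
        local_max_at (\<lambda>s y. u s y - phi s y) t0 x0 \<longrightarrow>
        phit t0 x0 \<le> Pk_minus k (D2phi t0 x0))"

definition viscosity_supersolution :: "nat \<Rightarrow> (real \<Rightarrow> real^'n \<Rightarrow> real) \<Rightarrow> bool" where
  "viscosity_supersolution k u \<longleftrightarrow>
     (\<forall>t0 x0 phi phit Dphi D2phi. t0 > 0 \<and> C12_test phi phit Dphi D2phi \<and>
        local_min_at (\<lambda>s y. u s y - phi s y) t0 x0 \<longrightarrow>
        phit t0 x0 \<ge> Pk_minus k (D2phi t0 x0))"

definition viscosity_solution :: "nat \<Rightarrow> (real \<Rightarrow> real^'n \<Rightarrow> real) \<Rightarrow> bool" where
  "viscosity_solution k u \<longleftrightarrow>
     continuous_on pdom (\<lambda>(t, x). u t x) \<and>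
     viscosity_subsolution k u \<and> viscosity_supersolution k u"

end

theory Submission
  imports Defs
begin


definition symm :: "real^'n^'n \<Rightarrow> bool" where
  "symm B \<longleftrightarrow> (\<forall>x y. (B *v x) \<bullet> y = x \<bullet> (B *v y))"

lemma eig_orth:
  assumes "symm B" "B *v x = l *\<^sub>R x" "B *v y = l' *\<^sub>R y" "l \<noteq> l'"
  shows "x \<bullet> y = 0"
proof -
  have "(B *v x) \<bullet> y = x \<bullet> (B *v y)" using assms(1) by (simp add: symm_def)
  then have "l * (x \<bullet> y) = l' * (x \<bullet> y)" using assms(2,3) by simp
  then show ?thesis using assms(4) by simp
qed

lemma eigvals_finite:
  fixes B :: "real^'n^'n"
  assumes "symm B"
  shows "finite {l. \<exists>v. v \<noteq> 0 \<and> B *v v = l *\<^sub>R v}"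
proof -
  define L where "L = {l. \<exists>v. v \<noteq> 0 \<and> B *v v = l *\<^sub>R v}"
  define ev where "ev l = (SOME v. v \<noteq> 0 \<and> B *v v = l *\<^sub>R v)" for l
  have ev: "ev l \<noteq> 0 \<and> B *v ev l = l *\<^sub>R ev l" if "l \<in> L" for l
    using that unfolding L_def ev_def by (metis (mono_tags, lifting) mem_Collect_eq someI_ex)
  have inj: "inj_on ev L"
  proof (rule inj_onI)
    fix a b assume ab: "a \<in> L" "b \<in> L" "ev a = ev b"
    then have "a *\<^sub>R ev a = b *\<^sub>R ev a" using ev by metis
    then show "a = b" using ev[OF ab(1)] by (simp add: scaleR_cancel_right)
  qed
  have "pairwise orthogonal (ev ` L)"
    unfolding pairwise_def orthogonal_def
    by (smt (verit, ccfv_threshold) assms eig_orth ev image_iff)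
  moreover have "0 \<notin> ev ` L" using ev by auto
  ultimately have "independent (ev ` L)" by (rule pairwise_orthogonal_independent)
  then have "finite (ev ` L)" using independent_bound by blast
  then show ?thesis using inj finite_image_iff L_def by blast
qed

lemma quad_bound_zero:
  fixes a C :: real
  assumes "\<forall>e::real. 2 * e * a + e^2 * C \<le> 0" "a \<ge> 0"
  shows "a = 0"
proof (rule ccontr)
  assume "a \<noteq> 0" then have a: "a > 0" using assms(2) by simp
  define e where "e = a / (\<bar>C\<bar> + 1)"
  have e: "e > 0" using a by (simp add: e_def)
  have e1: "e * (\<bar>C\<bar> + 1) = a" unfolding e_def by simp
  have "e * \<bar>C\<bar> \<le> a" using e1 e by (simp add: algebra_simps)
  then have "e * (e * \<bar>C\<bar>) \<le> e * a" using e by simp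
  moreover have "e^2 * C \<ge> e^2 * (- \<bar>C\<bar>)"
    by (rule mult_left_mono) auto
  moreover have "e^2 * (- \<bar>C\<bar>) = - (e * (e * \<bar>C\<bar>))" by (simp add: power2_eq_square)
  ultimately have "e^2 * C \<ge> - e * a" by linarith
  then have "2 * e * a + e^2 * C \<ge> e * a" by linarith
  moreover have "e * a > 0" using e a by simp
  moreover have "2 * e * a + e^2 * C \<le> 0" using assms(1) by blast
  ultimately show False by linarith
qed



lemma exists_eigvec:
  fixes B :: "real^'n^'n"
  assumes "symm B" "subspace S" "x0 \<in> S" "x0 \<noteq> 0" "\<And>x. x \<in> S \<Longrightarrow> B *v x \<in> S"
  shows "\<exists>v\<in>S. v \<noteq> 0 \<and> B *v v = (v \<bullet> (B *v v)) *\<^sub>R v"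
proof -
  define K where "K = S \<inter> sphere 0 1"
  have "compact K" unfolding K_def
    using closed_subspace[OF assms(2)] by (metis Int_commute compact_Int_closed compact_sphere)
  moreover have "(1 / norm x0) *\<^sub>R x0 \<in> K" unfolding K_def
    using assms(2,3,4) by (simp add: subspace_scale)
  moreover have "continuous_on K (\<lambda>x. x \<bullet> (B *v x))"
    by (intro continuous_intros)
  ultimately obtain v where v: "v \<in> K" "\<And>y. y \<in> K \<Longrightarrow> y \<bullet> (B *v y) \<le> v \<bullet> (B *v v)"
    using continuous_attains_sup[of K "\<lambda>x. x \<bullet> (B *v x)"] by blast
  define M where "M = v \<bullet> (B *v v)"
  have vS: "v \<in> S" and nv: "norm v = 1" using v(1) K_def by auto
  have bound: "y \<bullet> (B *v y) \<le> M * (y \<bullet> y)" if "y \<in> S" for y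
  proof (cases "y = 0")
    case True then show ?thesis by simp
  next
    case False
    have "(1 / norm y) *\<^sub>R y \<in> K" unfolding K_def using that False assms(2)
      by (simp add: subspace_scale)
    then have "((1 / norm y) *\<^sub>R y) \<bullet> (B *v ((1 / norm y) *\<^sub>R y)) \<le> M"
      using v(2) M_def by blast
    then have h: "(y \<bullet> (B *v y)) / (norm y * norm y) \<le> M"
      by (simp add: matrix_vector_mult_scaleR)
    have "norm y * norm y > 0" using False by simp
    then have "y \<bullet> (B *v y) \<le> M * (norm y * norm y)" using h by (simp add: divide_le_eq)
    then show ?thesis by (simp add: power2_norm_eq_inner[symmetric] power2_eq_square)
  qed
  define u where "u = B *v v - M *\<^sub>R v"
  have uS: "u \<in> S" unfolding u_def using assms(2,5) vS
    by (simp add: subspace_diff subspace_scale)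
  have vv: "v \<bullet> v = 1" using nv by (simp add: dot_square_norm)
  have uv: "u \<bullet> v = 0" unfolding u_def M_def using vv
    by (simp add: inner_diff_left inner_commute[of "B *v v" v])
  have sym: "(B *v x) \<bullet> y = x \<bullet> (B *v y)" for x y using assms(1) symm_def by blast
  have uBv: "u \<bullet> (B *v v) = u \<bullet> u"
  proof -
    have "B *v v = u + M *\<^sub>R v" unfolding u_def by simp
    then show ?thesis using uv by (simp add: inner_add_right)
  qed
  have "2 * e * (u \<bullet> u) + e^2 * (u \<bullet> (B *v u) - M * (u \<bullet> u)) \<le> 0" for e
  proof -
    have "v + e *\<^sub>R u \<in> S" using vS uS assms(2) by (simp add: subspace_add subspace_scale)
    then have P: "(v + e *\<^sub>R u) \<bullet> (B *v (v + e *\<^sub>R u)) \<le> M * ((v + e *\<^sub>R u) \<bullet> (v + e *\<^sub>R u))"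
      by (rule bound)
    have Q: "(v + e *\<^sub>R u) \<bullet> (B *v (v + e *\<^sub>R u)) = M + 2 * e * (u \<bullet> (B *v v)) + e^2 * (u \<bullet> (B *v u))"
    proof -
      have "v \<bullet> (B *v u) = u \<bullet> (B *v v)" using sym[of v u] by (simp add: inner_commute)
      then show ?thesis
        by (simp add: matrix_vector_right_distrib matrix_vector_mult_scaleR inner_add_left inner_add_right M_def power2_eq_square algebra_simps)
    qed
    have R: "(v + e *\<^sub>R u) \<bullet> (v + e *\<^sub>R u) = 1 + e^2 * (u \<bullet> u)"
      using vv uv by (simp add: inner_add_left inner_add_right inner_commute[of v u] power2_eq_square algebra_simps)
    have "M + 2 * e * (u \<bullet> u) + e^2 * (u \<bullet> (B *v u)) \<le> M * (1 + e^2 * (u \<bullet> u))"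
      using P unfolding Q R uBv .
    then show ?thesis by (simp add: algebra_simps)
  qed
  then have "u \<bullet> u = 0" using quad_bound_zero by (meson inner_ge_zero)
  then have "u = 0" by simp
  then have "B *v v = M *\<^sub>R v" unfolding u_def by simp
  moreover have "v \<noteq> 0" using nv by auto
  ultimately show ?thesis using vS M_def by blast
qed



lemma size_sum_mset_fin:
  fixes f :: "'a \<Rightarrow> 'b multiset"
  assumes "finite A"
  shows "size (sum f A) = (\<Sum>a\<in>A. size (f a))"
  using assms by (induction A rule: finite_induct) auto

lemma subspace_eigenspace: "subspace (eigenspace B l)"
  unfolding subspace_def eigenspace_def
  by (auto simp: matrix_vector_right_distrib matrix_vector_mult_scaleR scaleR_add_right)

lemma eig_span_UNIV:
  fixes B :: "real^'n^'n"
  assumes "symm B"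
  shows "span (\<Union>l\<in>{l. \<exists>v. v \<noteq> 0 \<and> B *v v = l *\<^sub>R v}. eigenspace B l) = UNIV"
proof (rule ccontr)
  define L where "L = {l. \<exists>v. v \<noteq> 0 \<and> B *v v = l *\<^sub>R v}"
  define X where "X = (\<Union>l\<in>L. eigenspace B l)"
  assume "span (\<Union>l\<in>{l. \<exists>v. v \<noteq> 0 \<and> B *v v = l *\<^sub>R v}. eigenspace B l) \<noteq> UNIV"
  then have "span X \<noteq> UNIV" unfolding X_def L_def .
  then have "dim X < DIM(real^'n)"
    using dim_eq_full dim_subset_UNIV by (metis le_neq_implies_less)
  then obtain x where x: "x \<noteq> 0" "\<And>y. y \<in> span X \<Longrightarrow> orthogonal x y"
    using orthogonal_to_subspace_exists by blast
  define S where "S = {y. \<forall>z \<in> span X. orthogonal z y}"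
  have subS: "subspace S" unfolding S_def by (rule subspace_orthogonal_to_vectors)
  have xS: "x \<in> S" unfolding S_def using x(2) by (simp add: orthogonal_commute)
  have sym: "(B *v a) \<bullet> b = a \<bullet> (B *v b)" for a b using assms symm_def by blast
  have Xinv: "(\<lambda>z. B *v z) ` X \<subseteq> X"
  proof
    fix y assume "y \<in> (\<lambda>z. B *v z) ` X"
    then obtain z l where "l \<in> L" "z \<in> eigenspace B l" "y = B *v z" unfolding X_def by auto
    then have "y = l *\<^sub>R z" "l *\<^sub>R z \<in> eigenspace B l"
      using subspace_eigenspace[of B l] by (auto simp: eigenspace_def subspace_scale matrix_vector_mult_scaleR)
    then show "y \<in> X" unfolding X_def using \<open>l \<in> L\<close> by auto
  qed
  have Tinv: "B *v z \<in> span X" if "z \<in> span X" for z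
  proof -
    have "B *v z \<in> (\<lambda>z. B *v z) ` span X" using that by blast
    also have "\<dots> = span ((\<lambda>z. B *v z) ` X)"
      by (rule span_linear_image[symmetric]) (simp add: matrix_vector_mul_linear)
    also have "\<dots> \<subseteq> span X" using Xinv by (rule span_mono)
    finally show ?thesis .
  qed
  have Sinv: "B *v y \<in> S" if "y \<in> S" for y
    unfolding S_def
  proof (intro CollectI ballI)
    fix z assume "z \<in> span X"
    then have "orthogonal (B *v z) y" using that Tinv unfolding S_def by blast
    then show "orthogonal z (B *v y)" using sym[of z y] by (simp add: orthogonal_def)
  qed
  obtain v where v: "v \<in> S" "v \<noteq> 0" "B *v v = (v \<bullet> (B *v v)) *\<^sub>R v"
    using exists_eigvec[OF assms subS xS x(1) Sinv] by blast
  have "v \<bullet> (B *v v) \<in> L" unfolding L_def using v by blast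
  then have "v \<in> X" unfolding X_def eigenspace_def using v(3) by blast
  then have "orthogonal v v" using v(1) span_base unfolding S_def by blast
  then show False using v(2) by (simp add: orthogonal_def)
qed

lemma eig_size:
  fixes B :: "real^'n^'n"
  assumes "symm B"
  shows "size (eigvals_mset B) \<ge> CARD('n)"
proof -
  define L where "L = {l. \<exists>v. v \<noteq> 0 \<and> B *v v = l *\<^sub>R v}"
  have finL: "finite L" using eigvals_finite[OF assms] L_def by simp
  have "\<exists>Bs. Bs \<subseteq> eigenspace B l \<and> independent Bs \<and> eigenspace B l \<subseteq> span Bs \<and> card Bs = dim (eigenspace B l)" for l
    using basis_exists by metis
  then obtain Bs where Bs: "\<And>l. Bs l \<subseteq> eigenspace B l \<and> independent (Bs l) \<and> eigenspace B l \<subseteq> span (Bs l) \<and> card (Bs l) = dim (eigenspace B l)"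
    by metis
  define Y where "Y = (\<Union>l\<in>L. Bs l)"
  have finY: "finite Y" unfolding Y_def using finL Bs independent_bound by blast
  have "(\<Union>l\<in>L. eigenspace B l) \<subseteq> span Y"
  proof
    fix z assume "z \<in> (\<Union>l\<in>L. eigenspace B l)"
    then obtain l where "l \<in> L" "z \<in> eigenspace B l" by blast
    then have "z \<in> span (Bs l)" using Bs by blast
    moreover have "span (Bs l) \<subseteq> span Y" unfolding Y_def using \<open>l \<in> L\<close> by (intro span_mono) blast
    ultimately show "z \<in> span Y" by blast
  qed
  then have "span (\<Union>l\<in>L. eigenspace B l) \<subseteq> span Y" by (simp add: span_minimal)
  then have "UNIV \<subseteq> span Y" using eig_span_UNIV[OF assms] L_def by simp
  then have "dim (UNIV :: (real^'n) set) \<le> card Y" using dim_le_card finY by blast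
  also have "card Y \<le> (\<Sum>l\<in>L. card (Bs l))" unfolding Y_def using finL by (rule card_UN_le)
  also have "\<dots> = (\<Sum>l\<in>L. dim (eigenspace B l))" using Bs by simp
  also have "\<dots> = size (eigvals_mset B)"
    unfolding eigvals_mset_def L_def[symmetric] using finL by (simp add: size_sum_mset_fin)
  finally show ?thesis by simp
qed



lemma in_sum_mset_fin:
  fixes f :: "'a \<Rightarrow> 'b multiset"
  assumes "finite A" "x \<in># sum f A"
  shows "\<exists>a\<in>A. x \<in># f a"
  using assms by (induction A rule: finite_induct) auto

lemma filter_sum_mset_fin:
  fixes f :: "'a \<Rightarrow> 'b multiset"
  assumes "finite A"
  shows "filter_mset P (sum f A) = (\<Sum>a\<in>A. filter_mset P (f a))"
  using assms by (induction A rule: finite_induct) auto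

lemma filter_replicate_mset': "filter_mset P (replicate_mset n x) = (if P x then replicate_mset n x else {#})"
  by (induction n) auto

lemma eigvals_mem:
  fixes B :: "real^'n^'n"
  assumes "symm B" "x \<in># eigvals_mset B"
  shows "\<exists>v. v \<noteq> 0 \<and> B *v v = x *\<^sub>R v"
proof -
  have fin: "finite {l. \<exists>v. v \<noteq> 0 \<and> B *v v = l *\<^sub>R v}" using eigvals_finite[OF assms(1)] .
  from in_sum_mset_fin[OF fin, of x] assms(2) obtain a where
    "a \<in> {l. \<exists>v. v \<noteq> 0 \<and> B *v v = l *\<^sub>R v}" "x \<in># replicate_mset (dim (eigenspace B a)) a"
    unfolding eigvals_mset_def by blast
  then have "x = a" using in_replicate_mset by metis
  then show ?thesis using \<open>a \<in> _\<close> by simp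
qed

lemma eigvals_sorted_props:
  fixes B :: "real^'n^'n"
  assumes "symm B"
  shows "sorted (eigvals_sorted B)" "length (eigvals_sorted B) \<ge> CARD('n)"
    "\<And>x. x \<in> set (eigvals_sorted B) \<Longrightarrow> \<exists>v. v \<noteq> 0 \<and> B *v v = x *\<^sub>R v"
proof -
  show "sorted (eigvals_sorted B)" unfolding eigvals_sorted_def by simp
  have "length (eigvals_sorted B) = size (eigvals_mset B)"
    unfolding eigvals_sorted_def by (metis mset_sorted_list_of_multiset size_mset)
  then show "length (eigvals_sorted B) \<ge> CARD('n)" using eig_size[OF assms] by simp
  fix x assume "x \<in> set (eigvals_sorted B)"
  then have "x \<in># eigvals_mset B" unfolding eigvals_sorted_def by simp
  then show "\<exists>v. v \<noteq> 0 \<and> B *v v = x *\<^sub>R v" using eigvals_mem[OF assms] by blast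
qed

lemma sum_list_lower:
  fixes xs :: "real list"
  assumes "\<And>x. x \<in> set xs \<Longrightarrow> p \<le> x"
  shows "real (length xs) * p \<le> sum_list xs"
  using assms
proof (induction xs)
  case (Cons a xs)
  then have "p \<le> a" "real (length xs) * p \<le> sum_list xs" by auto
  then show ?case by (simp add: algebra_simps)
qed simp

lemma sum_list_upper:
  fixes xs :: "real list"
  assumes "\<And>x. x \<in> set xs \<Longrightarrow> x \<le> p"
  shows "sum_list xs \<le> real (length xs) * p"
  using assms
proof (induction xs)
  case (Cons a xs)
  then have "a \<le> p" "sum_list xs \<le> real (length xs) * p" by auto
  then show ?case by (simp add: algebra_simps)
qed simp

lemma Pk_lower:
  fixes B :: "real^'n^'n"
  assumes "symm B" "\<And>v. p * (v \<bullet> v) \<le> v \<bullet> (B *v v)" "k \<le> CARD('n)"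
  shows "real k * p \<le> Pk_minus k B"
proof -
  define xs where "xs = eigvals_sorted B"
  have len: "length (take k xs) = k" using eigvals_sorted_props(2)[OF assms(1)] assms(3) xs_def by simp
  have "p \<le> x" if "x \<in> set (take k xs)" for x
  proof -
    have "x \<in> set xs" using that in_set_takeD by fast
    then obtain v where v: "v \<noteq> 0" "B *v v = x *\<^sub>R v" using eigvals_sorted_props(3)[OF assms(1)] xs_def by blast
    have "p * (v \<bullet> v) \<le> x * (v \<bullet> v)" using assms(2)[of v] v(2) by simp
    moreover have "v \<bullet> v > 0" using v(1) by simp
    ultimately show ?thesis by simp
  qed
  then have "real (length (take k xs)) * p \<le> sum_list (take k xs)" by (rule sum_list_lower)
  then show ?thesis unfolding Pk_minus_def xs_def[symmetric] using len by simp
qed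



lemma two_eig_contra:
  fixes B :: "real^'n^'n"
  assumes "symm B" "e \<noteq> 0" "e' \<noteq> 0" "e \<bullet> e' = 0"
    "B *v e = l *\<^sub>R e" "B *v e' = l' *\<^sub>R e'" "p < l" "p < l'"
    "\<And>v. v \<bullet> w = 0 \<Longrightarrow> v \<bullet> (B *v v) \<le> p * (v \<bullet> v)"
  shows False
proof -
  define a where "a = e' \<bullet> w"
  define b where "b = e \<bullet> w"
  define x where "x = a *\<^sub>R e - b *\<^sub>R e'"
  have ee: "e \<bullet> e > 0" "e' \<bullet> e' > 0" using assms(2,3) by auto
  have e'e: "e' \<bullet> e = 0" using assms(4) by (simp add: inner_commute)
  have xw: "x \<bullet> w = 0" unfolding x_def a_def b_def by (simp add: inner_diff_left)
  have Bx: "B *v x = (a * l) *\<^sub>R e - (b * l') *\<^sub>R e'"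
    unfolding x_def using assms(5,6)
    by (simp add: matrix_vector_mult_scaleR matrix_vector_mult_diff_distrib)
  have q: "x \<bullet> (B *v x) = a^2 * l * (e \<bullet> e) + b^2 * l' * (e' \<bullet> e')"
    unfolding x_def using assms(4,5,6) e'e
    by (simp add: matrix_vector_mult_scaleR matrix_vector_mult_diff_distrib inner_diff_left inner_diff_right power2_eq_square algebra_simps)
  have n: "x \<bullet> x = a^2 * (e \<bullet> e) + b^2 * (e' \<bullet> e')"
    unfolding x_def using assms(4) e'e
    by (simp add: inner_diff_left inner_diff_right power2_eq_square algebra_simps)
  show False
  proof (cases "a = 0 \<and> b = 0")
    case True
    then have "e \<bullet> w = 0" using b_def by simp
    then have "e \<bullet> (B *v e) \<le> p * (e \<bullet> e)" using assms(9) by blast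
    then have "l * (e \<bullet> e) \<le> p * (e \<bullet> e)" using assms(5) by simp
    then show False using ee assms(7) by (simp add: mult_le_cancel_right)
  next
    case False
    have "x \<bullet> (B *v x) \<le> p * (x \<bullet> x)" using assms(9) xw by blast
    then have le: "a^2 * (l - p) * (e \<bullet> e) + b^2 * (l' - p) * (e' \<bullet> e') \<le> 0"
      unfolding q n by (simp add: algebra_simps)
    have t1: "a^2 * (l - p) * (e \<bullet> e) \<ge> 0" "b^2 * (l' - p) * (e' \<bullet> e') \<ge> 0"
      using ee assms(7,8) by auto
    have "a^2 * (l - p) * (e \<bullet> e) > 0 \<or> b^2 * (l' - p) * (e' \<bullet> e') > 0"
      using False ee assms(7,8) by auto
    then show False using le t1 by linarith
  qed
qed

lemma count_big_le1:
  fixes B :: "real^'n^'n"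
  assumes "symm B" "\<And>v. v \<bullet> w = 0 \<Longrightarrow> v \<bullet> (B *v v) \<le> p * (v \<bullet> v)"
  shows "size (filter_mset (\<lambda>x. p < x) (eigvals_mset B)) \<le> 1"
proof -
  define L where "L = {l. \<exists>v. v \<noteq> 0 \<and> B *v v = l *\<^sub>R v}"
  have finL: "finite L" using eigvals_finite[OF assms(1)] L_def by simp
  define F where "F = {l\<in>L. p < l}"
  have finF: "finite F" using finL F_def by simp
  have "size (filter_mset (\<lambda>x. p < x) (eigvals_mset B)) = (\<Sum>l\<in>L. if p < l then dim (eigenspace B l) else 0)"
    unfolding eigvals_mset_def L_def[symmetric] using finL
    by (simp add: filter_sum_mset_fin filter_replicate_mset' size_sum_mset_fin if_distrib cong: if_cong)
  also have "\<dots> = (\<Sum>l\<in>F. dim (eigenspace B l))"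
    unfolding F_def using finL by (simp add: sum.inter_filter)
  also have "\<dots> \<le> of_nat (card F) * 1"
  proof (rule sum_bounded_above)
    fix l assume lF: "l \<in> F"
    show "dim (eigenspace B l) \<le> 1"
    proof (rule ccontr)
      assume "\<not> dim (eigenspace B l) \<le> 1"
      obtain Bs where Bs: "Bs \<subseteq> eigenspace B l" "pairwise orthogonal Bs" "\<And>x. x \<in> Bs \<Longrightarrow> norm x = 1"
        "card Bs = dim (eigenspace B l)"
        using orthonormal_basis_subspace[OF subspace_eigenspace] by metis
      then have c2: "card Bs \<ge> 2" using \<open>\<not> _ \<le> 1\<close> by simp
      then have finB: "finite Bs" by (metis card.infinite not_numeral_le_zero)
      have "\<not> card Bs \<le> Suc 0" using c2 by simp
      then obtain e e' where "e \<in> Bs" "e' \<in> Bs" "e \<noteq> e'"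
        using card_le_Suc0_iff_eq[OF finB] by blast
      then show False
        using two_eig_contra[OF assms(1), of e e' l l' p w for l'] Bs lF assms(2) F_def
        unfolding pairwise_def orthogonal_def eigenspace_def
        by (metis (mono_tags, lifting) mem_Collect_eq norm_zero subsetD zero_neq_one)
    qed
  qed
  also have "\<dots> \<le> 1"
  proof (rule ccontr)
    assume "\<not> of_nat (card F) * 1 \<le> (1::nat)"
    then have "\<not> card F \<le> Suc 0" by simp
    then obtain l l' where ll: "l \<in> F" "l' \<in> F" "l \<noteq> l'"
      using card_le_Suc0_iff_eq[OF finF] by blast
    then obtain e e' where "e \<noteq> 0" "B *v e = l *\<^sub>R e" "e' \<noteq> 0" "B *v e' = l' *\<^sub>R e'"
      unfolding F_def L_def by blast
    moreover have "e \<bullet> e' = 0" using eig_orth[OF assms(1)] calculation ll(3) by blast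
    ultimately show False using two_eig_contra[OF assms(1)] ll F_def assms(2) by blast
  qed
  finally show ?thesis .
qed

lemma Pk_upper:
  fixes B :: "real^'n^'n"
  assumes "symm B" "\<And>v. v \<bullet> w = 0 \<Longrightarrow> v \<bullet> (B *v v) \<le> p * (v \<bullet> v)" "k < CARD('n)"
  shows "Pk_minus k B \<le> real k * p"
proof -
  define xs where "xs = eigvals_sorted B"
  have srt: "sorted xs" using eigvals_sorted_props(1)[OF assms(1)] xs_def by simp
  have lenk: "k < length xs" using eigvals_sorted_props(2)[OF assms(1)] assms(3) xs_def by simp
  have len: "length (take k xs) = k" using lenk by simp
  have cnt: "length (filter (\<lambda>x. p < x) xs) \<le> 1"
  proof -
    have "length (filter (\<lambda>x. p < x) xs) = size (filter_mset (\<lambda>x. p < x) (mset xs))"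
      by (metis mset_filter size_mset)
    also have "mset xs = eigvals_mset B" unfolding xs_def eigvals_sorted_def by simp
    finally show ?thesis using count_big_le1[OF assms(1,2)] by simp
  qed
  have "x \<le> p" if "x \<in> set (take k xs)" for x
  proof (rule ccontr)
    assume "\<not> x \<le> p"
    then have px: "p < x" by simp
    have "xs = take k xs @ drop k xs" by simp
    then have "\<forall>y\<in>set (drop k xs). x \<le> y" using srt that by (metis sorted_append)
    moreover have "drop k xs \<noteq> []" using lenk by simp
    ultimately obtain y where y: "y \<in> set (drop k xs)" "p < y" using px
      by (metis last_in_set order_less_le_trans)
    have "filter (\<lambda>x. p < x) (take k xs) \<noteq> []" using that px by (metis filter_empty_conv)
    moreover have "filter (\<lambda>x. p < x) (drop k xs) \<noteq> []" using y by (metis filter_empty_conv)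
    ultimately have "length (filter (\<lambda>x. p < x) (take k xs)) + length (filter (\<lambda>x. p < x) (drop k xs)) \<ge> 2"
    proof -
      assume a1: "filter (\<lambda>x. p < x) (take k xs) \<noteq> []" and a2: "filter (\<lambda>x. p < x) (drop k xs) \<noteq> []"
      have "length (filter (\<lambda>x. p < x) (take k xs)) > 0" using a1 by simp
      moreover have "length (filter (\<lambda>x. p < x) (drop k xs)) > 0" using a2 by simp
      ultimately show ?thesis by linarith
    qed
    moreover have "length (filter (\<lambda>x. p < x) xs) = length (filter (\<lambda>x. p < x) (take k xs)) + length (filter (\<lambda>x. p < x) (drop k xs))"
      by (metis append_take_drop_id filter_append length_append)
    ultimately show False using cnt by simp
  qed
  then have "sum_list (take k xs) \<le> real (length (take k xs)) * p" by (rule sum_list_upper)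
  then show ?thesis unfolding Pk_minus_def xs_def[symmetric] using len by simp
qed



lemma line_deriv:
  fixes F :: "'a::real_normed_vector \<Rightarrow> real"
  assumes "(F has_derivative F') (at (a + t *\<^sub>R v))"
  shows "((\<lambda>t. F (a + t *\<^sub>R v)) has_real_derivative F' v) (at t)"
proof -
  have l: "linear F'" using assms has_derivative_linear by blast
  have d1: "((\<lambda>t. a + t *\<^sub>R v) has_derivative (\<lambda>d. d *\<^sub>R v)) (at t)"
    by (auto intro!: derivative_eq_intros)
  have "((\<lambda>t. F (a + t *\<^sub>R v)) has_derivative (\<lambda>d. F' (d *\<^sub>R v))) (at t)"
    using has_derivative_compose[OF d1 assms] by (simp add: o_def)
  moreover have "(\<lambda>d. F' (d *\<^sub>R v)) = (*) (F' v)"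
    using linear_cmul[OF l] by (auto simp: mult.commute)
  ultimately show ?thesis unfolding has_field_derivative_def by simp
qed

lemma bl_mv: "bounded_linear (\<lambda>A::real^'n^'m. A *v k)"
proof -
  have "linear (\<lambda>A::real^'n^'m. A *v k)"
    by (rule linearI) (simp_all add: matrix_vector_mult_add_rdistrib scaleR_matrix_vector_assoc)
  then show ?thesis by (simp add: linear_conv_bounded_linear)
qed

lemma delta_mvt:
  fixes f :: "real^'n \<Rightarrow> real" and G :: "real^'n \<Rightarrow> real^'n" and H :: "real^'n \<Rightarrow> real^'n^'n"
  assumes hf: "\<And>y. (f has_derivative (\<lambda>d. G y \<bullet> d)) (at y)"
    and hG: "\<And>y. (G has_derivative (\<lambda>d. H y *v d)) (at y)"
    and s: "s > 0"
  shows "\<exists>y. dist y x \<le> s * (norm h + norm k) \<and>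
     f (x + s *\<^sub>R k + s *\<^sub>R h) - f (x + s *\<^sub>R h) - f (x + s *\<^sub>R k) + f x = s * (s * ((H y *v k) \<bullet> h))"
proof -
  define \<phi> where "\<phi> \<tau> = f ((x + s *\<^sub>R k) + \<tau> *\<^sub>R h) - f (x + \<tau> *\<^sub>R h)" for \<tau>
  define \<phi>' where "\<phi>' \<tau> = G ((x + s *\<^sub>R k) + \<tau> *\<^sub>R h) \<bullet> h - G (x + \<tau> *\<^sub>R h) \<bullet> h" for \<tau>
  have "DERIV \<phi> \<tau> :> \<phi>' \<tau>" for \<tau>
    unfolding \<phi>_def \<phi>'_def
    by (intro DERIV_diff line_deriv hf)
  then obtain \<xi> where xi: "0 < \<xi>" "\<xi> < s" "\<phi> s - \<phi> 0 = (s - 0) * \<phi>' \<xi>"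
    using MVT2[OF s, of \<phi> \<phi>'] by blast
  define \<psi> where "\<psi> \<sigma> = G ((x + \<xi> *\<^sub>R h) + \<sigma> *\<^sub>R k) \<bullet> h" for \<sigma>
  define \<psi>' where "\<psi>' \<sigma> = (H ((x + \<xi> *\<^sub>R h) + \<sigma> *\<^sub>R k) *v k) \<bullet> h" for \<sigma>
  have "DERIV \<psi> \<sigma> :> \<psi>' \<sigma>" for \<sigma>
  proof -
    have "((\<lambda>y. G y \<bullet> h) has_derivative (\<lambda>d. (H y *v d) \<bullet> h)) (at y)" for y
      using bounded_linear.has_derivative[OF bounded_linear_inner_left hG] .
    then show ?thesis unfolding \<psi>_def \<psi>'_def by (rule line_deriv)
  qed
  then obtain \<eta> where eta: "0 < \<eta>" "\<eta> < s" "\<psi> s - \<psi> 0 = (s - 0) * \<psi>' \<eta>"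
    using MVT2[OF s, of \<psi> \<psi>'] by blast
  define y where "y = (x + \<xi> *\<^sub>R h) + \<eta> *\<^sub>R k"
  have "\<phi>' \<xi> = \<psi> s - \<psi> 0" unfolding \<phi>'_def \<psi>_def by (simp add: algebra_simps)
  then have eq: "\<phi> s - \<phi> 0 = s * (s * ((H y *v k) \<bullet> h))" using xi eta unfolding \<psi>'_def y_def by simp
  have "dist y x = norm (\<xi> *\<^sub>R h + \<eta> *\<^sub>R k)" unfolding y_def dist_norm by (simp add: algebra_simps)
  also have "\<dots> \<le> \<xi> * norm h + \<eta> * norm k"
    using xi eta by (metis (no_types) norm_triangle_ineq abs_of_pos norm_scaleR)
  also have "\<dots> \<le> s * norm h + s * norm k"
    using xi eta by (intro add_mono mult_right_mono) auto
  finally have "dist y x \<le> s * (norm h + norm k)" by (simp add: algebra_simps)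
  moreover have "\<phi> s - \<phi> 0 = f (x + s *\<^sub>R k + s *\<^sub>R h) - f (x + s *\<^sub>R h) - f (x + s *\<^sub>R k) + f x"
    unfolding \<phi>_def by simp
  ultimately show ?thesis using eq by metis
qed

lemma schwarz:
  fixes f :: "real^'n \<Rightarrow> real" and G :: "real^'n \<Rightarrow> real^'n" and H :: "real^'n \<Rightarrow> real^'n^'n"
  assumes hf: "\<And>y. (f has_derivative (\<lambda>d. G y \<bullet> d)) (at y)"
    and hG: "\<And>y. (G has_derivative (\<lambda>d. H y *v d)) (at y)"
    and cH: "isCont H x"
  shows "(H x *v k) \<bullet> h = (H x *v h) \<bullet> k"
proof -
  define F1 where "F1 y = (H y *v k) \<bullet> h" for y
  define F2 where "F2 y = (H y *v h) \<bullet> k" for y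
  have c1: "isCont F1 x" unfolding F1_def
    by (intro continuous_intros bounded_linear.isCont[OF bl_mv cH])
  have c2: "isCont F2 x" unfolding F2_def
    by (intro continuous_intros bounded_linear.isCont[OF bl_mv cH])
  have hyp: "\<bar>F1 x - F2 x\<bar> < 2 * e" if e: "e > 0" for e
  proof -
    obtain d1 where d1: "d1 > 0" "\<And>y. dist y x < d1 \<Longrightarrow> dist (F1 y) (F1 x) < e"
      using c1 e unfolding continuous_at_eps_delta by blast
    obtain d2 where d2: "d2 > 0" "\<And>y. dist y x < d2 \<Longrightarrow> dist (F2 y) (F2 x) < e"
      using c2 e unfolding continuous_at_eps_delta by blast
    define s where "s = min d1 d2 / (2 * (norm h + norm k + 1))"
    have pos: "2 * (norm h + norm k + 1) > 0" by (smt (verit) norm_ge_zero)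
    have s: "s > 0" unfolding s_def using d1 d2 pos by (intro divide_pos_pos) simp_all
    have sb: "s * (norm h + norm k) < min d1 d2"
    proof -
      have "s * (norm h + norm k) \<le> s * (norm h + norm k + 1)" using s by simp
      also have "\<dots> = min d1 d2 / 2" unfolding s_def using pos
        by (simp add: field_simps)
      also have "\<dots> < min d1 d2" using d1 d2 by (simp add: min_def)
      finally show ?thesis .
    qed
    obtain y1 where y1: "dist y1 x \<le> s * (norm h + norm k)"
      "f (x + s *\<^sub>R k + s *\<^sub>R h) - f (x + s *\<^sub>R h) - f (x + s *\<^sub>R k) + f x = s * (s * F1 y1)"
      using delta_mvt[OF hf hG s, of x h k] unfolding F1_def by blast
    obtain y2 where y2: "dist y2 x \<le> s * (norm k + norm h)"
      "f (x + s *\<^sub>R h + s *\<^sub>R k) - f (x + s *\<^sub>R k) - f (x + s *\<^sub>R h) + f x = s * (s * F2 y2)"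
      using delta_mvt[OF hf hG s, of x k h] unfolding F2_def by blast
    have "s * (s * F1 y1) = s * (s * F2 y2)" using y1(2) y2(2) by (simp add: algebra_simps)
    then have eq: "F1 y1 = F2 y2" using s by simp
    have "dist (F1 y1) (F1 x) < e" using d1 y1(1) sb by auto
    moreover have "dist (F2 y2) (F2 x) < e" using d2 y2(1) sb by (auto simp: add.commute)
    ultimately show ?thesis using eq unfolding dist_real_def by linarith
  qed
  have "F1 x = F2 x"
  proof (rule ccontr)
    assume ne: "F1 x \<noteq> F2 x"
    then have "\<bar>F1 x - F2 x\<bar> / 2 > 0" by simp
    from hyp[OF this] show False by simp
  qed
  then show ?thesis unfolding F1_def F2_def .
qed



lemma second_order_max:
  fixes h h' :: "real \<Rightarrow> real"
  assumes dh: "\<And>\<tau>. DERIV h \<tau> :> h' \<tau>" and dh': "DERIV h' 0 :> L" and d: "d > 0"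
    and mx: "\<And>\<tau>. \<bar>\<tau>\<bar> < d \<Longrightarrow> h \<tau> \<le> h 0"
  shows "L \<le> 0"
proof (rule ccontr)
  assume "\<not> L \<le> 0" then have L: "L > 0" by simp
  have h0: "h' 0 = 0" using DERIV_local_max[OF dh d] mx by simp
  obtain d' where d': "d' > 0" "\<And>\<delta>. \<delta> > 0 \<Longrightarrow> \<delta> < d' \<Longrightarrow> h' 0 < h' (0 + \<delta>)"
    using DERIV_pos_inc_right[OF dh' L] by blast
  define \<tau> where "\<tau> = min d d' / 2"
  have \<tau>: "\<tau> > 0" "\<tau> < d" "\<tau> < d'" unfolding \<tau>_def using d d' by (auto simp: min_def)
  obtain z where z: "0 < z" "z < \<tau>" "h \<tau> - h 0 = (\<tau> - 0) * h' z"
    using MVT2[OF \<tau>(1), of h h'] dh by blast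
  have "h' z > 0" using d'(2)[of z] z \<tau> h0 by simp
  then have "\<tau> * h' z > 0" using \<tau> by simp
  then have "h \<tau> > h 0" using z by simp
  moreover have "h \<tau> \<le> h 0" using mx \<tau> by simp
  ultimately show False by simp
qed

lemma time_deriv_u:
  fixes g g' :: "real \<Rightarrow> real"
  assumes dg: "(g has_real_derivative g' \<rho>) (at \<rho>)" and \<rho>: "\<rho> = sqrt (2 * real k * tt + n)"
    and pos: "2 * real k * tt + n > 0"
  shows "DERIV (\<lambda>s. g (sqrt (2 * real k * s + n))) tt :> g' \<rho> * (real k / \<rho>)"
proof -
  have d1: "DERIV (\<lambda>s. 2 * real k * s + n) tt :> 2 * real k"
    by (auto intro!: derivative_eq_intros)
  have d2: "DERIV (\<lambda>s. sqrt (2 * real k * s + n)) tt :> inverse \<rho> / 2 * (2 * real k)"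
    using DERIV_chain2[OF DERIV_real_sqrt[OF pos] d1] \<rho> by simp
  have "DERIV (\<lambda>s. g (sqrt (2 * real k * s + n))) tt :> g' \<rho> * (inverse \<rho> / 2 * (2 * real k))"
    using DERIV_chain2[OF _ d2, of g] dg \<rho> by simp
  moreover have "g' \<rho> * (inverse \<rho> / 2 * (2 * real k)) = g' \<rho> * (real k / \<rho>)"
    by (simp add: field_simps)
  ultimately show ?thesis by simp
qed

lemma norm_line: "(norm (x0 + \<tau> *\<^sub>R v))^2 = (norm x0)^2 + 2 * \<tau> * (x0 \<bullet> v) + \<tau>^2 * (v \<bullet> v)"
proof -
  have "(x0 + \<tau> *\<^sub>R v) \<bullet> (x0 + \<tau> *\<^sub>R v) = x0 \<bullet> x0 + 2 * \<tau> * (x0 \<bullet> v) + \<tau>^2 * (v \<bullet> v)"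
    by (simp add: inner_add_left inner_add_right inner_commute[of v x0] power2_eq_square algebra_simps)
  then show ?thesis by (metis power2_norm_eq_inner)
qed
  


lemma space_deriv_u:
  fixes g g' g'' :: "real \<Rightarrow> real" and x0 v :: "'a::real_inner"
  assumes dg: "\<And>s. s > 0 \<Longrightarrow> (g has_real_derivative g' s) (at s) \<and> (g' has_real_derivative g'' s) (at s)"
    and c: "c > 0"
    and a_def: "a = x0 \<bullet> v" and vv_def: "vv = v \<bullet> v" and \<rho>0_def: "\<rho>0 = sqrt (c + (norm x0)^2)"
    and R_def: "R = (\<lambda>\<tau>. c + (norm x0)^2 + 2 * \<tau> * a + \<tau>^2 * vv)"
  shows "\<And>\<tau>. DERIV (\<lambda>\<tau>. g (sqrt (c + (norm (x0 + \<tau> *\<^sub>R v))^2))) \<tau> :> g' (sqrt (R \<tau>)) * ((a + \<tau> * vv) / sqrt (R \<tau>))"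
    and "DERIV (\<lambda>\<tau>. g' (sqrt (R \<tau>)) * ((a + \<tau> * vv) / sqrt (R \<tau>))) 0 :>
           g'' \<rho>0 * (a / \<rho>0) * (a / \<rho>0) + ((vv * \<rho>0 - a * (a / \<rho>0)) / (\<rho>0 * \<rho>0)) * g' \<rho>0"
    and "g'' \<rho>0 * (a / \<rho>0) * (a / \<rho>0) + ((vv * \<rho>0 - a * (a / \<rho>0)) / (\<rho>0 * \<rho>0)) * g' \<rho>0
           - (g' \<rho>0 / \<rho>0) * vv = (g'' \<rho>0 - g' \<rho>0 / \<rho>0) * (a / \<rho>0)^2"
proof -
  have Req: "c + (norm (x0 + \<tau> *\<^sub>R v))^2 = R \<tau>" for \<tau>
    unfolding R_def a_def vv_def using norm_line[of x0 \<tau> v] by simp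
  have Rpos: "R \<tau> > 0" for \<tau> using Req[of \<tau>] c by (metis add_pos_nonneg zero_le_power2)
  have sRpos: "sqrt (R \<tau>) > 0" for \<tau> using Rpos by simp
  have R0: "R 0 = c + (norm x0)^2" unfolding R_def by simp
  have \<rho>0pos: "\<rho>0 > 0" using sRpos[of 0] R0 \<rho>0_def by simp
  have dR: "DERIV R \<tau> :> 2 * a + 2 * \<tau> * vv" for \<tau>
    unfolding R_def by (auto intro!: derivative_eq_intros simp: algebra_simps)
  have d\<rho>: "DERIV (\<lambda>\<tau>. sqrt (R \<tau>)) \<tau> :> (a + \<tau> * vv) / sqrt (R \<tau>)" for \<tau>
  proof -
    have "DERIV (\<lambda>\<tau>. sqrt (R \<tau>)) \<tau> :> inverse (sqrt (R \<tau>)) / 2 * (2 * a + 2 * \<tau> * vv)"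
      using DERIV_chain2[OF DERIV_real_sqrt[OF Rpos[of \<tau>]] dR] .
    moreover have "inverse (sqrt (R \<tau>)) / 2 * (2 * a + 2 * \<tau> * vv) = (a + \<tau> * vv) / sqrt (R \<tau>)"
      using sRpos[of \<tau>] by (simp add: field_simps)
    ultimately show ?thesis by (simp only:)
  qed
  show "DERIV (\<lambda>\<tau>. g (sqrt (c + (norm (x0 + \<tau> *\<^sub>R v))^2))) \<tau> :> g' (sqrt (R \<tau>)) * ((a + \<tau> * vv) / sqrt (R \<tau>))" for \<tau>
  proof -
    have "DERIV (\<lambda>\<tau>. g (sqrt (R \<tau>))) \<tau> :> g' (sqrt (R \<tau>)) * ((a + \<tau> * vv) / sqrt (R \<tau>))"
      using DERIV_chain2[OF _ d\<rho>[of \<tau>], of g] dg[OF sRpos[of \<tau>]] by blast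
    then show ?thesis unfolding Req .
  qed
  have dg'0: "DERIV (\<lambda>\<tau>. g' (sqrt (R \<tau>))) 0 :> g'' \<rho>0 * (a / \<rho>0)"
  proof -
    have "DERIV (\<lambda>\<tau>. g' (sqrt (R \<tau>))) 0 :> g'' (sqrt (R 0)) * ((a + 0 * vv) / sqrt (R 0))"
      using DERIV_chain2[OF _ d\<rho>[of 0], of g'] dg[OF sRpos[of 0]] by blast
    then show ?thesis using R0 \<rho>0_def by simp
  qed
  have dq: "DERIV (\<lambda>\<tau>. (a + \<tau> * vv) / sqrt (R \<tau>)) 0 :> (vv * \<rho>0 - a * (a / \<rho>0)) / (\<rho>0 * \<rho>0)"
  proof -
    have "DERIV (\<lambda>\<tau>. a + \<tau> * vv) 0 :> vv" by (auto intro!: derivative_eq_intros)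
    from DERIV_divide[OF this d\<rho>[of 0]] sRpos[of 0]
    have "DERIV (\<lambda>\<tau>. (a + \<tau> * vv) / sqrt (R \<tau>)) 0 :>
       (vv * sqrt (R 0) - (a + 0 * vv) * ((a + 0 * vv) / sqrt (R 0))) / (sqrt (R 0) * sqrt (R 0))" by simp
    then show ?thesis using R0 \<rho>0_def by simp
  qed
  have "(a + 0 * vv) / sqrt (R 0) = a / \<rho>0" using R0 \<rho>0_def by simp
  then show "DERIV (\<lambda>\<tau>. g' (sqrt (R \<tau>)) * ((a + \<tau> * vv) / sqrt (R \<tau>))) 0 :>
           g'' \<rho>0 * (a / \<rho>0) * (a / \<rho>0) + ((vv * \<rho>0 - a * (a / \<rho>0)) / (\<rho>0 * \<rho>0)) * g' \<rho>0"
    using DERIV_mult[OF dg'0 dq] R0 \<rho>0_def by simp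
  show "g'' \<rho>0 * (a / \<rho>0) * (a / \<rho>0) + ((vv * \<rho>0 - a * (a / \<rho>0)) / (\<rho>0 * \<rho>0)) * g' \<rho>0
           - (g' \<rho>0 / \<rho>0) * vv = (g'' \<rho>0 - g' \<rho>0 / \<rho>0) * (a / \<rho>0)^2"
    using \<rho>0pos by (simp add: field_simps power2_eq_square)
qed



lemma touch:
  fixes phi :: "real \<Rightarrow> real^'n \<Rightarrow> real" and g g' g'' :: "real \<Rightarrow> real" and \<sigma> :: real
  assumes dg: "\<And>s. s > 0 \<Longrightarrow> (g has_real_derivative g' s) (at s) \<and> (g' has_real_derivative g'' s) (at s)"
    and k: "1 \<le> k" and t0: "t0 > 0" and C: "C12_test phi phit Dphi D2phi"
    and sg: "\<sigma> = 1 \<or> \<sigma> = -1"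
    and mx: "\<exists>e>0. \<forall>s y. s > 0 \<and> \<bar>s - t0\<bar> < e \<and> dist y x0 < e \<longrightarrow>
       \<sigma> * (g (sqrt (2 * real k * s + (norm y)^2)) - phi s y) \<le> \<sigma> * (g (sqrt (2 * real k * t0 + (norm x0)^2)) - phi t0 x0)"
  defines "\<rho>0 \<equiv> sqrt (2 * real k * t0 + (norm x0)^2)"
  shows "phit t0 x0 = g' \<rho>0 * (real k / \<rho>0)"
    and "\<sigma> * (g'' \<rho>0 * ((x0 \<bullet> v) / \<rho>0) * ((x0 \<bullet> v) / \<rho>0) + (((v \<bullet> v) * \<rho>0 - (x0 \<bullet> v) * ((x0 \<bullet> v) / \<rho>0)) / (\<rho>0 * \<rho>0)) * g' \<rho>0
             - v \<bullet> (D2phi t0 x0 *v v)) \<le> 0"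
proof -
  obtain e where e: "e > 0" and mxe: "\<And>s y. s > 0 \<Longrightarrow> \<bar>s - t0\<bar> < e \<Longrightarrow> dist y x0 < e \<Longrightarrow>
       \<sigma> * (g (sqrt (2 * real k * s + (norm y)^2)) - phi s y) \<le> \<sigma> * (g (sqrt (2 * real k * t0 + (norm x0)^2)) - phi t0 x0)"
    using mx by blast
  have Cd: "\<And>t x. t > 0 \<Longrightarrow> ((\<lambda>s. phi s x) has_real_derivative phit t x) (at t) \<and>
        ((\<lambda>y. phi t y) has_derivative (\<lambda>h. Dphi t x \<bullet> h)) (at x) \<and>
        ((\<lambda>y. Dphi t y) has_derivative (\<lambda>h. D2phi t x *v h)) (at x)"
    using C unfolding C12_test_def by blast
  have c: "2 * real k * t0 > 0" using k t0 by simp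
  have pos: "2 * real k * t0 + (norm x0)^2 > 0" using c by (simp add: add_pos_nonneg)
  have \<rho>0pos: "\<rho>0 > 0" unfolding \<rho>0_def using pos by simp
  have s0: "\<sigma> \<noteq> 0" using sg by auto
  \<comment> \<open>time\<close>
  have dt: "DERIV (\<lambda>s. \<sigma> * (g (sqrt (2 * real k * s + (norm x0)^2)) - phi s x0)) t0 :> \<sigma> * (g' \<rho>0 * (real k / \<rho>0) - phit t0 x0)"
  proof -
    have A: "(g has_real_derivative g' \<rho>0) (at \<rho>0)" using dg[OF \<rho>0pos] by blast
    have B: "DERIV (\<lambda>s. phi s x0) t0 :> phit t0 x0" using Cd[OF t0] by blast
    show ?thesis
      by (intro DERIV_cmult DERIV_diff time_deriv_u[where g=g and g'=g' and \<rho>=\<rho>0 and k=k and tt=t0 and n="(norm x0)^2", OF A \<rho>0_def[THEN meta_eq_to_obj_eq] pos] B)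
  qed
  have "\<sigma> * (g' \<rho>0 * (real k / \<rho>0) - phit t0 x0) = 0"
  proof (rule DERIV_local_max[OF dt])
    show "0 < min e t0" using e t0 by simp
    show "\<forall>y. \<bar>t0 - y\<bar> < min e t0 \<longrightarrow> \<sigma> * (g (sqrt (2 * real k * y + (norm x0)^2)) - phi y x0) \<le> \<sigma> * (g (sqrt (2 * real k * t0 + (norm x0)^2)) - phi t0 x0)"
      using mxe by (auto simp: abs_minus_commute)
  qed
  then show "phit t0 x0 = g' \<rho>0 * (real k / \<rho>0)" using s0 by simp
  \<comment> \<open>space\<close>
  define c0 where "c0 = 2 * real k * t0"
  define a where "a = x0 \<bullet> v"
  define vv where "vv = v \<bullet> v"
  define R where "R = (\<lambda>\<tau>. c0 + (norm x0)^2 + 2 * \<tau> * a + \<tau>^2 * vv)"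
  have \<rho>0': "\<rho>0 = sqrt (c0 + (norm x0)^2)" unfolding \<rho>0_def c0_def ..
  note sd = space_deriv_u[OF dg c[folded c0_def] a_def vv_def \<rho>0' R_def]
  define h where "h \<tau> = \<sigma> * (g (sqrt (c0 + (norm (x0 + \<tau> *\<^sub>R v))^2)) - phi t0 (x0 + \<tau> *\<^sub>R v))" for \<tau>
  define h' where "h' \<tau> = \<sigma> * (g' (sqrt (R \<tau>)) * ((a + \<tau> * vv) / sqrt (R \<tau>)) - Dphi t0 (x0 + \<tau> *\<^sub>R v) \<bullet> v)" for \<tau>
  have dh: "DERIV h \<tau> :> h' \<tau>" for \<tau>
  proof -
    have P: "DERIV (\<lambda>\<tau>. phi t0 (x0 + \<tau> *\<^sub>R v)) \<tau> :> Dphi t0 (x0 + \<tau> *\<^sub>R v) \<bullet> v"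
      using line_deriv[where F="phi t0" and F'="\<lambda>d. Dphi t0 (x0 + \<tau> *\<^sub>R v) \<bullet> d" and a=x0 and t=\<tau> and v=v]
        Cd[OF t0, of "x0 + \<tau> *\<^sub>R v"] by blast
    show ?thesis unfolding h_def h'_def by (intro DERIV_cmult DERIV_diff sd(1) P)
  qed
  have dh': "DERIV h' 0 :> \<sigma> * (g'' \<rho>0 * (a / \<rho>0) * (a / \<rho>0) + ((vv * \<rho>0 - a * (a / \<rho>0)) / (\<rho>0 * \<rho>0)) * g' \<rho>0
             - (D2phi t0 x0 *v v) \<bullet> v)"
  proof -
    have "((\<lambda>y. Dphi t0 y \<bullet> v) has_derivative (\<lambda>d. (D2phi t0 x0 *v d) \<bullet> v)) (at (x0 + 0 *\<^sub>R v))"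
      using bounded_linear.has_derivative[OF bounded_linear_inner_left, of "\<lambda>y. Dphi t0 y" "\<lambda>h. D2phi t0 x0 *v h" "at x0" v]
        Cd[OF t0, of x0] by simp
    then have "DERIV (\<lambda>\<tau>. Dphi t0 (x0 + \<tau> *\<^sub>R v) \<bullet> v) 0 :> (D2phi t0 x0 *v v) \<bullet> v"
      by (rule line_deriv)
    then show ?thesis unfolding h'_def by (intro DERIV_cmult DERIV_diff sd(2))
  qed
  have "\<sigma> * (g'' \<rho>0 * (a / \<rho>0) * (a / \<rho>0) + ((vv * \<rho>0 - a * (a / \<rho>0)) / (\<rho>0 * \<rho>0)) * g' \<rho>0
             - (D2phi t0 x0 *v v) \<bullet> v) \<le> 0"
  proof (rule second_order_max[OF dh dh'])
    show "0 < e / (norm v + 1)" using e by (simp add: add_nonneg_pos)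
    fix \<tau> :: real assume "\<bar>\<tau>\<bar> < e / (norm v + 1)"
    then have "\<bar>\<tau>\<bar> * (norm v + 1) < e" by (simp add: pos_less_divide_eq add_nonneg_pos)
    moreover have "\<bar>\<tau>\<bar> * norm v \<le> \<bar>\<tau>\<bar> * (norm v + 1)" by (simp add: mult_left_mono)
    ultimately have "\<bar>\<tau>\<bar> * norm v < e" by linarith
    then have "dist (x0 + \<tau> *\<^sub>R v) x0 < e" by (simp add: dist_norm)
    then have "\<sigma> * (g (sqrt (2 * real k * t0 + (norm (x0 + \<tau> *\<^sub>R v))^2)) - phi t0 (x0 + \<tau> *\<^sub>R v))
        \<le> \<sigma> * (g (sqrt (2 * real k * t0 + (norm x0)^2)) - phi t0 x0)"
      using mxe[OF t0, of "x0 + \<tau> *\<^sub>R v"] e by simp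
    moreover have "h 0 = \<sigma> * (g (sqrt (2 * real k * t0 + (norm x0)^2)) - phi t0 x0)"
      unfolding h_def c0_def by simp
    ultimately show "h \<tau> \<le> h 0" unfolding h_def c0_def by simp
  qed
  then show "\<sigma> * (g'' \<rho>0 * ((x0 \<bullet> v) / \<rho>0) * ((x0 \<bullet> v) / \<rho>0) + (((v \<bullet> v) * \<rho>0 - (x0 \<bullet> v) * ((x0 \<bullet> v) / \<rho>0)) / (\<rho>0 * \<rho>0)) * g' \<rho>0
             - v \<bullet> (D2phi t0 x0 *v v)) \<le> 0"
    unfolding a_def vv_def by (simp add: inner_commute)
qed



lemma isCont_slice:
  fixes F :: "real \<Rightarrow> real^'n \<Rightarrow> 'b::topological_space"
  assumes "continuous_on pdom (\<lambda>(t, x). F t x)" "t0 > 0"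
  shows "isCont (F t0) x0"
proof -
  have "continuous_on UNIV (\<lambda>y. (\<lambda>(t, x). F t x) (t0, y))"
    by (rule continuous_on_compose2[OF assms(1)]) (use assms(2) in \<open>auto intro!: continuous_intros simp: pdom_def\<close>)
  then have "continuous_on UNIV (F t0)" by simp
  then show ?thesis using continuous_on_eq_continuous_at open_UNIV by blast
qed

lemma D2_symm:
  fixes phi :: "real \<Rightarrow> real^'n \<Rightarrow> real"
  assumes C: "C12_test phi phit Dphi D2phi" and t0: "t0 > 0"
  shows "symm (D2phi t0 x0)"
proof -
  have Cd: "\<And>x. ((\<lambda>y. phi t0 y) has_derivative (\<lambda>h. Dphi t0 x \<bullet> h)) (at x) \<and>
        ((\<lambda>y. Dphi t0 y) has_derivative (\<lambda>h. D2phi t0 x *v h)) (at x)"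
    using C t0 unfolding C12_test_def by blast
  have cH: "isCont (D2phi t0) x0"
    using C t0 isCont_slice unfolding C12_test_def by blast
  have "(D2phi t0 x0 *v k) \<bullet> h = (D2phi t0 x0 *v h) \<bullet> k" for h k
    using schwarz[of "phi t0" "Dphi t0" "D2phi t0" x0 k h] Cd cH by blast
  then show ?thesis unfolding symm_def by (metis inner_commute)
qed

lemma alg_id:
  fixes \<rho>0 :: real
  assumes "\<rho>0 > 0"
  shows "G2 * (a / \<rho>0) * (a / \<rho>0) + ((vv * \<rho>0 - a * (a / \<rho>0)) / (\<rho>0 * \<rho>0)) * G1
           - (G1 / \<rho>0) * vv = (G2 - G1 / \<rho>0) * (a / \<rho>0)^2"
  using assms by (simp add: field_simps power2_eq_square)

theorem mainTheorem1:
  fixes g :: "real \<Rightarrow> real" and k :: nat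
  assumes "CARD('n) \<ge> 2" and "1 \<le> k" and "k < CARD('n)"
    and "\<exists>g' g''. \<forall>s>0. (g has_real_derivative g' s) (at s) \<and>
              (g' has_real_derivative g'' s) (at s) \<and> g'' s - g' s / s \<ge> 0"
  shows "viscosity_solution k (\<lambda>t (x::real^'n). g (sqrt (2 * real k * t + (norm x)\<^sup>2)))
         \<and> (\<forall>x::real^'n. g (sqrt (2 * real k * 0 + (norm x)\<^sup>2)) = g (norm x))"
proof -
  obtain g' g'' where gh: "\<And>s. s > 0 \<Longrightarrow> (g has_real_derivative g' s) (at s) \<and>
              (g' has_real_derivative g'' s) (at s) \<and> g'' s - g' s / s \<ge> 0"
    using assms(4) by blast
  have dg: "\<And>s. s > 0 \<Longrightarrow> (g has_real_derivative g' s) (at s) \<and> (g' has_real_derivative g'' s) (at s)"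
    using gh by blast
  have cont: "continuous_on pdom (\<lambda>(t, x::real^'n). g (sqrt (2 * real k * t + (norm x)\<^sup>2)))"
  proof -
    have cg: "continuous_on {0<..} g"
      by (rule continuous_at_imp_continuous_on) (use dg DERIV_isCont in blast)
    have "continuous_on pdom (\<lambda>z::real \<times> (real^'n). g (sqrt (2 * real k * fst z + (norm (snd z))\<^sup>2)))"
    proof (rule continuous_on_compose2[OF cg])
      show "continuous_on pdom (\<lambda>z::real \<times> (real^'n). sqrt (2 * real k * fst z + (norm (snd z))\<^sup>2))"
        by (intro continuous_intros)
      show "(\<lambda>z::real \<times> (real^'n). sqrt (2 * real k * fst z + (norm (snd z))\<^sup>2)) ` pdom \<subseteq> {0<..}"
        using assms(2) by (auto simp: pdom_def add_pos_nonneg)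
    qed
    then show ?thesis by (simp add: case_prod_unfold)
  qed
  have sub: "viscosity_subsolution k (\<lambda>t (x::real^'n). g (sqrt (2 * real k * t + (norm x)\<^sup>2)))"
    unfolding viscosity_subsolution_def
  proof (intro allI impI, elim conjE)
    fix t0 x0 and phi :: "real \<Rightarrow> real^'n \<Rightarrow> real" and phit Dphi D2phi
    assume t0: "t0 > 0" and C: "C12_test phi phit Dphi D2phi"
      and lm: "local_max_at (\<lambda>s y. g (sqrt (2 * real k * s + (norm y)\<^sup>2)) - phi s y) t0 x0"
    define \<rho>0 where "\<rho>0 = sqrt (2 * real k * t0 + (norm x0)^2)"
    have \<rho>0pos: "\<rho>0 > 0" unfolding \<rho>0_def using assms(2) t0 by (simp add: add_pos_nonneg)
    have mx: "\<exists>e>0. \<forall>s y. s > 0 \<and> \<bar>s - t0\<bar> < e \<and> dist y x0 < e \<longrightarrow>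
       1 * (g (sqrt (2 * real k * s + (norm y)^2)) - phi s y) \<le> 1 * (g (sqrt (2 * real k * t0 + (norm x0)^2)) - phi t0 x0)"
      using lm unfolding local_max_at_def by simp
    note T = touch[OF dg assms(2) t0 C _ mx, folded \<rho>0_def]
    define p where "p = g' \<rho>0 / \<rho>0"
    have "p * (v \<bullet> v) \<le> v \<bullet> (D2phi t0 x0 *v v)" for v
    proof -
      have "g'' \<rho>0 - g' \<rho>0 / \<rho>0 \<ge> 0" using gh[OF \<rho>0pos] by blast
      then have "(g'' \<rho>0 - g' \<rho>0 / \<rho>0) * ((x0 \<bullet> v) / \<rho>0)^2 \<ge> 0" by simp
      then show ?thesis using T(2)[of v] alg_id[OF \<rho>0pos, of "g'' \<rho>0" "x0 \<bullet> v" "v \<bullet> v" "g' \<rho>0"]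
        unfolding p_def by simp
    qed
    then have "real k * p \<le> Pk_minus k (D2phi t0 x0)"
      using Pk_lower[OF D2_symm[OF C t0]] assms(3) by simp
    moreover have "phit t0 x0 = real k * p" using T(1) unfolding p_def by simp
    ultimately show "phit t0 x0 \<le> Pk_minus k (D2phi t0 x0)" by simp
  qed
  have super: "viscosity_supersolution k (\<lambda>t (x::real^'n). g (sqrt (2 * real k * t + (norm x)\<^sup>2)))"
    unfolding viscosity_supersolution_def
  proof (intro allI impI, elim conjE)
    fix t0 x0 and phi :: "real \<Rightarrow> real^'n \<Rightarrow> real" and phit Dphi D2phi
    assume t0: "t0 > 0" and C: "C12_test phi phit Dphi D2phi"
      and lm: "local_min_at (\<lambda>s y. g (sqrt (2 * real k * s + (norm y)\<^sup>2)) - phi s y) t0 x0"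
    define \<rho>0 where "\<rho>0 = sqrt (2 * real k * t0 + (norm x0)^2)"
    have \<rho>0pos: "\<rho>0 > 0" unfolding \<rho>0_def using assms(2) t0 by (simp add: add_pos_nonneg)
    have mx: "\<exists>e>0. \<forall>s y. s > 0 \<and> \<bar>s - t0\<bar> < e \<and> dist y x0 < e \<longrightarrow>
       (-1) * (g (sqrt (2 * real k * s + (norm y)^2)) - phi s y) \<le> (-1) * (g (sqrt (2 * real k * t0 + (norm x0)^2)) - phi t0 x0)"
    proof -
      obtain e where e: "e > 0" and H: "\<And>s y. s > 0 \<and> \<bar>s - t0\<bar> < e \<and> dist y x0 < e \<Longrightarrow>
         g (sqrt (2 * real k * s + (norm y)^2)) - phi s y \<ge> g (sqrt (2 * real k * t0 + (norm x0)^2)) - phi t0 x0"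
        using lm unfolding local_min_at_def by blast
      show ?thesis
      proof (intro exI[of _ e] conjI allI impI)
        show "e > 0" by (rule e)
        fix s y assume "s > 0 \<and> \<bar>s - t0\<bar> < e \<and> dist y x0 < e"
        from H[OF this] show "(-1) * (g (sqrt (2 * real k * s + (norm y)^2)) - phi s y) \<le> (-1) * (g (sqrt (2 * real k * t0 + (norm x0)^2)) - phi t0 x0)"
          by simp
      qed
    qed
    note T = touch[OF dg assms(2) t0 C _ mx, folded \<rho>0_def]
    define p where "p = g' \<rho>0 / \<rho>0"
    have "v \<bullet> (D2phi t0 x0 *v v) \<le> p * (v \<bullet> v)" if "v \<bullet> x0 = 0" for v
    proof -
      have "x0 \<bullet> v = 0" using that by (simp add: inner_commute)
      then show ?thesis using T(2)[of v] alg_id[OF \<rho>0pos, of "g'' \<rho>0" "x0 \<bullet> v" "v \<bullet> v" "g' \<rho>0"]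
        unfolding p_def by simp
    qed
    then have "Pk_minus k (D2phi t0 x0) \<le> real k * p"
      using Pk_upper[OF D2_symm[OF C t0]] assms(3) by blast
    moreover have "phit t0 x0 = real k * p" using T(1) unfolding p_def by simp
    ultimately show "Pk_minus k (D2phi t0 x0) \<le> phit t0 x0" by simp
  qed
  show ?thesis
    using cont sub super unfolding viscosity_solution_def by simp
qed

end
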